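(* Let $(V,h)$ be an object of $\mathrm{Herm}(\mathrm{sVect})$ whose Hermitian pairing has signature $(p_1,p_2,p_3,p_4)$. Then the dual super Hermitian vector space $V^*$, equipped with the dual Hermitian pairing, has signature $(p_1,p_2,p_4,p_3)$.
   Context: $\mathrm{sVect}$: finite-dimensional complex $\mathbb{Z}/2$-graded vector spaces with even linear maps, graded tensor product and Koszul braiding $v\otimes w\mapsto(-1)^{|v||w|}w\otimes v$. $V^*$ is the graded space of all linear functionals, $T^*(f)=f\circ T$, with evaluation $f\otimes v\mapsto f(v)$; this is the chosen dual functor. Anti-involution $dV=\overline{V}^*$ (identified with $\overline{V^*}$ by $\bar f(\bar v)=\overline{f(v)}$), monoidal structure $\chi(\bar f\otimes\bar g)(\bar v\otimes\bar w)=(-1)^{|g||v|}\overline{f(v)g(w)}$, $\eta_V(v)=\Phi_v$ with $\Phi_v(f)=(-1)^{|f||v|}f(v)$. $\mathrm{Herm}(\mathrm{sVect})$: objects $(V,h)$ with $h\colon V\to dV$ an even isomorphism with $d(h)\circ\eta_V=h$; equivalently $V$ with a nondegenerate sesquilinear form $\langle\cdot,\cdot\rangle$, $V_0\perp V_1$, $\langle v,w\rangle=(-1)^{|v||w|}\overline{\langle w,v\rangle}$. An orthonormal basis is a homogeneous basis $e_1,\dots,e_n$ with $\langle e_i,e_j\rangle=\delta_{ij}\langle e_j,e_j\rangle$ and $\langle e_j,e_j\rangle\in\{\pm1,\pm i\}$; the signature $(p_1,p_2,p_3,p_4)$ counts the $j$ with $\langle e_j,e_j\rangle$ equal to $+1,-1,+i,-i$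 respectively. The dual Hermitian pairing on $V^*$ is the composite $V^*\xrightarrow{(h^* )^{-1}}(dV)^*\cong d(V^* )$, where the last isomorphism is the canonical uniqueness-of-duals isomorphism (both are duals of $dV$, using that $d$ is symmetric monoidal). *)

theory Defs
  imports "HOL-Analysis.Analysis" "HOL-Library.Function_Algebras"
begin

definition super_space ::
  "(complex \<Rightarrow> 'v::ab_group_add \<Rightarrow> 'v) \<Rightarrow> 'v set \<Rightarrow> 'v set \<Rightarrow> 'v set \<Rightarrow> bool" where
  "super_space sc Bas V0 V1 \<longleftrightarrow>
     finite_dimensional_vector_space sc Bas \<and>
     module.subspace sc V0 \<and> module.subspace sc V1 \<and>
     V0 \<inter> V1 = {0} \<and> (\<forall>v. \<exists>a\<in>V0. \<exists>b\<in>V1. v = a + b)"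

definition fscale :: "complex \<Rightarrow> ('v \<Rightarrow> complex) \<Rightarrow> ('v \<Rightarrow> complex)" where
  "fscale c f = (\<lambda>x. c * f x)"

definition dual_space :: "(complex \<Rightarrow> 'v::ab_group_add \<Rightarrow> 'v) \<Rightarrow> ('v \<Rightarrow> complex) set" where
  "dual_space sc = {f. Vector_Spaces.linear sc (*) f}"

definition dual_even :: "(complex \<Rightarrow> 'v::ab_group_add \<Rightarrow> 'v) \<Rightarrow> 'v set \<Rightarrow> ('v \<Rightarrow> complex) set" where
  "dual_even sc V1 = {f \<in> dual_space sc. \<forall>v\<in>V1. f v = 0}"

definition dual_odd :: "(complex \<Rightarrow> 'v::ab_group_add \<Rightarrow> 'v) \<Rightarrow> 'v set \<Rightarrow> ('v \<Rightarrow> complex) set" where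
  "dual_odd sc V0 = {f \<in> dual_space sc. \<forall>v\<in>V0. f v = 0}"

text \<open>Conjugate-linear functionals on a space W (with scalar multiplication s),
extended by 0 outside W.  For W = V this is dV = (conj V)^*; for W = V^* it is
d(V^*) = (conj V^*)^*.\<close>
definition conj_functionals :: "(complex \<Rightarrow> 'a::ab_group_add \<Rightarrow> 'a) \<Rightarrow> 'a set \<Rightarrow> ('a \<Rightarrow> complex) set" where
  "conj_functionals s W = {\<phi>.
     (\<forall>x\<in>W. \<forall>y\<in>W. \<phi> (x + y) = \<phi> x + \<phi> y) \<and>
     (\<forall>c. \<forall>x\<in>W. \<phi> (s c x) = cnj c * \<phi> x) \<and>
     (\<forall>x. x \<notin> W \<longrightarrow> \<phi> x = 0)}"

definition dV :: "(complex \<Rightarrow> 'v::ab_group_add \<Rightarrow> 'v) \<Rightarrow> ('v \<Rightarrow> complex) set" where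
  "dV sc = conj_functionals sc UNIV"

definition dV_dual :: "(complex \<Rightarrow> 'v::ab_group_add \<Rightarrow> 'v) \<Rightarrow> (('v \<Rightarrow> complex) \<Rightarrow> complex) set" where
  "dV_dual sc = {\<Psi>.
     (\<forall>x\<in>dV sc. \<forall>y\<in>dV sc. \<Psi> (x + y) = \<Psi> x + \<Psi> y) \<and>
     (\<forall>c. \<forall>x\<in>dV sc. \<Psi> (fscale c x) = c * \<Psi> x) \<and>
     (\<forall>x. x \<notin> dV sc \<longrightarrow> \<Psi> x = 0)}"

definition d_dual :: "(complex \<Rightarrow> 'v::ab_group_add \<Rightarrow> 'v) \<Rightarrow> (('v \<Rightarrow> complex) \<Rightarrow> complex) set" where
  "d_dual sc = conj_functionals fscale (dual_space sc)"

text \<open>Evaluation pairing d(V^*) (x) dV -> C exhibiting d(V^*) as a dual of dV: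
Koszul braiding, then chi, then d(coev_V) with coev_V(1) = sum_b b (x) b^*, then d(1) = C.
For homogeneous arguments all Koszul signs cancel on the nonzero terms, giving
  ev(a (x) phi) = sum_b phi(b) * a(b^*),
where b ranges over a basis Bas of V and b^* is the dual basis (coordinate functional).
\<close>
definition dual_ev ::
  "(complex \<Rightarrow> 'v::ab_group_add \<Rightarrow> 'v) \<Rightarrow> 'v set \<Rightarrow> (('v \<Rightarrow> complex) \<Rightarrow> complex) \<Rightarrow> ('v \<Rightarrow> complex) \<Rightarrow> complex" where
  "dual_ev sc Bas a \<phi> = (\<Sum>b\<in>Bas. \<phi> b * a (\<lambda>v. module.representation sc Bas v b))"

text \<open>(h^*)^{-1} : V^* -> (dV)^*, where h : V -> dV, h v = form v, and h^*(Psi) = Psi o h.\<close>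
definition hstar_inv ::
  "(complex \<Rightarrow> 'v::ab_group_add \<Rightarrow> 'v) \<Rightarrow> ('v \<Rightarrow> 'v \<Rightarrow> complex) \<Rightarrow> ('v \<Rightarrow> complex) \<Rightarrow> (('v \<Rightarrow> complex) \<Rightarrow> complex)" where
  "hstar_inv sc form g = (THE \<Psi>. \<Psi> \<in> dV_dual sc \<and> (\<forall>v. \<Psi> (form v) = g v))"

text \<open>Canonical uniqueness-of-duals isomorphism (dV)^* -> d(V^*):
the unique theta(Psi) with ev(theta(Psi) (x) phi) = Psi(phi) for all phi in dV.\<close>
definition duals_iso ::
  "(complex \<Rightarrow> 'v::ab_group_add \<Rightarrow> 'v) \<Rightarrow> 'v set \<Rightarrow> (('v \<Rightarrow> complex) \<Rightarrow> complex) \<Rightarrow> (('v \<Rightarrow> complex) \<Rightarrow> complex)" where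
  "duals_iso sc Bas \<Psi> = (THE a. a \<in> d_dual sc \<and> (\<forall>\<phi>\<in>dV sc. dual_ev sc Bas a \<phi> = \<Psi> \<phi>))"

text \<open>The dual Hermitian pairing on V^*: h_* = theta o (h^*)^{-1},
with the convention <x,y> = h(x)(conj y) used for both V and V^*.\<close>
definition dual_form ::
  "(complex \<Rightarrow> 'v::ab_group_add \<Rightarrow> 'v) \<Rightarrow> 'v set \<Rightarrow> ('v \<Rightarrow> 'v \<Rightarrow> complex) \<Rightarrow> ('v \<Rightarrow> complex) \<Rightarrow> ('v \<Rightarrow> complex) \<Rightarrow> complex" where
  "dual_form sc Bas form g g' = duals_iso sc Bas (hstar_inv sc form g) g'"

text \<open>Object of Herm(sVect): super vector space with a nondegenerate super-Hermitian
sesquilinear form <v,w> = h(v)(conj w) (linear in v, conjugate-linear in w), V0 orthogonal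
to V1, h : V -> dV an (even) isomorphism, and <v,w> = (-1)^{|v||w|} conj <w,v>.\<close>
definition herm_super ::
  "(complex \<Rightarrow> 'v::ab_group_add \<Rightarrow> 'v) \<Rightarrow> 'v set \<Rightarrow> 'v set \<Rightarrow> 'v set \<Rightarrow> ('v \<Rightarrow> 'v \<Rightarrow> complex) \<Rightarrow> bool" where
  "herm_super sc Bas V0 V1 form \<longleftrightarrow>
     super_space sc Bas V0 V1 \<and>
     (\<forall>w. Vector_Spaces.linear sc (*) (\<lambda>v. form v w)) \<and>
     (\<forall>v. form v \<in> dV sc) \<and>
     bij_betw form UNIV (dV sc) \<and>
     (\<forall>v\<in>V0. \<forall>w\<in>V1. form v w = 0 \<and> form w v = 0) \<and>
     (\<forall>v\<in>V0 \<union> V1. \<forall>w\<in>V0 \<union> V1.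
        form v w = (if v \<in> V1 \<and> w \<in> V1 then -1 else 1) * cnj (form w v))"

definition has_signature ::
  "(complex \<Rightarrow> 'a::ab_group_add \<Rightarrow> 'a) \<Rightarrow> 'a set \<Rightarrow> 'a set \<Rightarrow> 'a set \<Rightarrow> ('a \<Rightarrow> 'a \<Rightarrow> complex)
    \<Rightarrow> nat \<Rightarrow> nat \<Rightarrow> nat \<Rightarrow> nat \<Rightarrow> bool" where
  "has_signature s W W0 W1 form p1 p2 p3 p4 \<longleftrightarrow>
     (\<exists>E. finite E \<and> E \<subseteq> W \<and> \<not> module.dependent s E \<and> module.span s E = W \<and>
        (\<forall>e\<in>E. e \<in> W0 \<or> e \<in> W1) \<and>
        (\<forall>e\<in>E. \<forall>e'\<in>E. e \<noteq> e' \<longrightarrow> form e e' = 0) \<and>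
        (\<forall>e\<in>E. form e e \<in> {1, -1, \<i>, -\<i>}) \<and>
        card {e\<in>E. form e e = 1} = p1 \<and> card {e\<in>E. form e e = -1} = p2 \<and>
        card {e\<in>E. form e e = \<i>} = p3 \<and> card {e\<in>E. form e e = -\<i>} = p4)"

end

theory Submission
  imports Defs
begin

lemma sum_fun_apply: "(\<Sum>i\<in>I. F i) x = (\<Sum>i\<in>I. F i x)"
  by (induct I rule: infinite_finite_induct) auto

lemma sum_hom:
  fixes F :: "'a::ab_group_add \<Rightarrow> complex"
  assumes add: "\<forall>x\<in>W. \<forall>y\<in>W. F (x + y) = F x + F y"
    and sca: "\<forall>c. \<forall>x\<in>W. F (s c x) = k c * F x"
    and z: "0 \<in> W" and cl: "\<forall>x\<in>W. \<forall>y\<in>W. x + y \<in> W" and cs: "\<forall>c. \<forall>x\<in>W. s c x \<in> W"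
    and fin: "finite I" and h: "\<forall>i\<in>I. h i \<in> W"
  shows "F (\<Sum>i\<in>I. s (c i) (h i)) = (\<Sum>i\<in>I. k (c i) * F (h i))"
  using fin h
proof (induct I rule: finite_induct)
  case empty
  have "F (0 + 0) = F 0 + F 0" using add z by blast
  then show ?case by simp
next
  case (insert x I)
  have s: "(\<Sum>i\<in>I. s (c i) (h i)) \<in> W"
    using insert(1) insert(4)
  proof (induct I rule: finite_induct)
    case empty then show ?case using z by simp
  next
    case (insert y J) then show ?case using cl cs by simp
  qed
  have "s (c x) (h x) \<in> W" using cs insert by simp
  then show ?case using insert s add sca by simp
qed


locale hs =
  fixes sc :: "complex \<Rightarrow> 'v::ab_group_add \<Rightarrow> 'v"
    and Bas V0 V1 :: "'v set"
    and form :: "'v \<Rightarrow> 'v \<Rightarrow> complex"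
  assumes H: "herm_super sc Bas V0 V1 form"
begin

lemma fd: "finite_dimensional_vector_space sc Bas"
  using H unfolding herm_super_def super_space_def by blast

lemma vs: "vector_space sc"
  using fd unfolding finite_dimensional_vector_space_def by blast

sublocale vs: vector_space sc by (rule vs)

lemma basfin: "finite Bas" and basind: "vs.independent Bas" and basspan: "vs.span Bas = UNIV"
  using fd unfolding finite_dimensional_vector_space_def finite_dimensional_vector_space_axioms_def by auto

lemma lin1: "form (x + y) w = form x w + form y w" "form (sc c x) w = c * form x w"
proof -
  have "Vector_Spaces.linear sc (*) (\<lambda>v. form v w)" using H unfolding herm_super_def by blast
  then show "form (x + y) w = form x w + form y w" "form (sc c x) w = c * form x w"
    unfolding Vector_Spaces.linear_iff by auto
qed

lemma formdV: "form v \<in> dV sc" using H unfolding herm_super_def by blast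

lemma lin2: "form v (x + y) = form v x + form v y" "form v (sc c x) = cnj c * form v x"
  using formdV[of v] unfolding dV_def conj_functionals_def by auto

lemma bij: "bij_betw form UNIV (dV sc)" using H unfolding herm_super_def by blast

lemma form_add: "form (x + y) = form x + form y"
  by (rule ext) (simp add: lin1)

lemma form_scale: "form (sc c x) = fscale c (form x)"
  by (rule ext) (simp add: lin1 fscale_def)

lemma form_inj: "form x = form y \<Longrightarrow> x = y"
  using bij unfolding bij_betw_def inj_on_def by blast

lemma form_surj: "\<phi> \<in> dV sc \<Longrightarrow> \<exists>v. \<phi> = form v"
  using bij unfolding bij_betw_def by blast

lemma dV_closed: "0 \<in> dV sc" "\<phi> \<in> dV sc \<Longrightarrow> \<psi> \<in> dV sc \<Longrightarrow> \<phi> + \<psi> \<in> dV sc"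
  "\<phi> \<in> dV sc \<Longrightarrow> fscale c \<phi> \<in> dV sc"
  unfolding dV_def conj_functionals_def fscale_def by (auto simp: algebra_simps)

lemma dual_closed: "0 \<in> dual_space sc" "f \<in> dual_space sc \<Longrightarrow> g \<in> dual_space sc \<Longrightarrow> f + g \<in> dual_space sc"
  "f \<in> dual_space sc \<Longrightarrow> fscale c f \<in> dual_space sc"
  unfolding dual_space_def fscale_def Vector_Spaces.linear_iff
  using vs vector_space_over_itself.vector_space_axioms by (auto simp: algebra_simps)

lemma dual_lin: "f \<in> dual_space sc \<Longrightarrow> f (x + y) = f x + f y"
  "f \<in> dual_space sc \<Longrightarrow> f (sc c x) = c * f x"
  unfolding dual_space_def Vector_Spaces.linear_iff by auto

lemma dual_sum: "f \<in> dual_space sc \<Longrightarrow> finite I \<Longrightarrow>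
   f (\<Sum>i\<in>I. sc (c i) (x i)) = (\<Sum>i\<in>I. c i * f (x i))"
  by (rule sum_hom[where W=UNIV and k="\<lambda>c. c"]) (auto simp: dual_lin)

lemma dV_sum: "\<phi> \<in> dV sc \<Longrightarrow> finite I \<Longrightarrow>
   \<phi> (\<Sum>i\<in>I. sc (c i) (x i)) = (\<Sum>i\<in>I. cnj (c i) * \<phi> (x i))"
  by (rule sum_hom[where W=UNIV and k=cnj]) (auto simp: dV_def conj_functionals_def)

lemma inj_form: "inj form" using form_inj unfolding inj_def by blast

lemma hstar:
  assumes g: "g \<in> dual_space sc"
  shows "hstar_inv sc form g \<in> dV_dual sc \<and> (\<forall>v. hstar_inv sc form g (form v) = g v)"
proof -
  define P0 where "P0 \<phi> = (if \<phi> \<in> dV sc then g (inv form \<phi>) else 0)" for \<phi>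
  have iv: "inv form (form v) = v" for v using inj_form by (simp add: inv_f_f)
  have P0f: "P0 (form v) = g v" for v using formdV[of v] iv by (simp add: P0_def)
  have P: "P0 \<in> dV_dual sc \<and> (\<forall>v. P0 (form v) = g v)"
  proof (intro conjI allI P0f)
    show "P0 \<in> dV_dual sc"
      unfolding dV_dual_def
    proof (intro CollectI conjI ballI allI impI)
      fix x y assume "x \<in> dV sc" "y \<in> dV sc"
      then obtain v w where "x = form v" "y = form w" using form_surj by blast
      then show "P0 (x + y) = P0 x + P0 y"
        using P0f form_add[of v w, symmetric] dual_lin(1)[OF g] by simp
    next
      fix c x assume "x \<in> dV sc"
      then obtain v where "x = form v" using form_surj by blast
      then show "P0 (fscale c x) = c * P0 x"
        using P0f form_scale[of c v, symmetric] dual_lin(2)[OF g] by simp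
    next
      fix x assume "x \<notin> dV sc" then show "P0 x = 0" by (simp add: P0_def)
    qed
  qed
  have "hstar_inv sc form g = P0"
    unfolding hstar_inv_def
  proof (rule the_equality)
    show "P0 \<in> dV_dual sc \<and> (\<forall>v. P0 (form v) = g v)" by (rule P)
  next
    fix Q assume Q: "Q \<in> dV_dual sc \<and> (\<forall>v. Q (form v) = g v)"
    show "Q = P0"
    proof
      fix \<phi> show "Q \<phi> = P0 \<phi>"
      proof (cases "\<phi> \<in> dV sc")
        case True
        then obtain v where "\<phi> = form v" using form_surj by blast
        then show ?thesis using Q P0f by simp
      next
        case False then show ?thesis using Q unfolding P0_def dV_dual_def by simp
      qed
    qed
  qed
  then show ?thesis using P by simp
qed

lemma dVdual_sum:
  assumes Q: "Q \<in> dV_dual sc" and fin: "finite I" and h: "\<forall>i\<in>I. h i \<in> dV sc"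
  shows "Q (\<Sum>i\<in>I. fscale (c i) (h i)) = (\<Sum>i\<in>I. c i * Q (h i))"
proof (rule sum_hom[where W="dV sc" and k="\<lambda>c. c"])
  show "\<forall>x\<in>dV sc. \<forall>y\<in>dV sc. Q (x + y) = Q x + Q y" using Q unfolding dV_dual_def by blast
  show "\<forall>c. \<forall>x\<in>dV sc. Q (fscale c x) = c * Q x" using Q unfolding dV_dual_def by blast
  show "\<forall>x\<in>dV sc. \<forall>y\<in>dV sc. x + y \<in> dV sc" using dV_closed by blast
  show "\<forall>c. \<forall>x\<in>dV sc. fscale c x \<in> dV sc" using dV_closed by blast
qed (use dV_closed fin h in auto)

lemma ddual_sum:
  assumes a: "a \<in> d_dual sc" and fin: "finite I" and h: "\<forall>i\<in>I. h i \<in> dual_space sc"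
  shows "a (\<Sum>i\<in>I. fscale (c i) (h i)) = (\<Sum>i\<in>I. cnj (c i) * a (h i))"
proof (rule sum_hom[where W="dual_space sc" and k=cnj])
  show "\<forall>x\<in>dual_space sc. \<forall>y\<in>dual_space sc. a (x + y) = a x + a y"
    using a unfolding d_dual_def conj_functionals_def by blast
  show "\<forall>c. \<forall>x\<in>dual_space sc. a (fscale c x) = cnj c * a x"
    using a unfolding d_dual_def conj_functionals_def by blast
  show "\<forall>x\<in>dual_space sc. \<forall>y\<in>dual_space sc. x + y \<in> dual_space sc" using dual_closed by blast
  show "\<forall>c. \<forall>x\<in>dual_space sc. fscale c x \<in> dual_space sc" using dual_closed by blast
qed (use dual_closed fin h in auto)

abbreviation "bstar b \<equiv> (\<lambda>v. vs.representation Bas v b)"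

lemma bstar_dual: "bstar b \<in> dual_space sc"
  unfolding dual_space_def using vs.linear_representation[OF basind basspan] by simp

lemma expand: "(\<Sum>b\<in>Bas. sc (bstar b v) b) = v"
  by (rule vs.sum_representation_eq) (use basind basspan basfin in auto)

lemma dual_expand: assumes f: "f \<in> dual_space sc" shows "(\<Sum>b\<in>Bas. fscale (f b) (bstar b)) = f"
proof
  fix x
  have "f x = f (\<Sum>b\<in>Bas. sc (bstar b x) b)" by (simp add: expand)
  also have "\<dots> = (\<Sum>b\<in>Bas. bstar b x * f b)" by (rule dual_sum[OF f basfin])
  finally show "(\<Sum>b\<in>Bas. fscale (f b) (bstar b)) x = f x"
    by (simp add: sum_fun_apply fscale_def mult.commute)
qed

lemma dV_expand: assumes f: "\<phi> \<in> dV sc" shows "(\<Sum>b\<in>Bas. fscale (\<phi> b) (\<lambda>v. cnj (bstar b v))) = \<phi>"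
proof
  fix x
  have "\<phi> x = \<phi> (\<Sum>b\<in>Bas. sc (bstar b x) b)" by (simp add: expand)
  also have "\<dots> = (\<Sum>b\<in>Bas. cnj (bstar b x) * \<phi> b)" by (rule dV_sum[OF f basfin])
  finally show "(\<Sum>b\<in>Bas. fscale (\<phi> b) (\<lambda>v. cnj (bstar b v))) x = \<phi> x"
    by (simp add: sum_fun_apply fscale_def mult.commute)
qed

lemma cnj_dV: assumes f: "f \<in> dual_space sc" shows "(\<lambda>v. cnj (f v)) \<in> dV sc"
  unfolding dV_def conj_functionals_def using dual_lin[OF f] by simp

lemma duals:
  assumes Q: "Q \<in> dV_dual sc" and f: "f \<in> dual_space sc"
  shows "duals_iso sc Bas Q f = Q (\<lambda>v. cnj (f v))"
proof -
  define a0 where "a0 f = (if f \<in> dual_space sc then Q (\<lambda>v. cnj (f v)) else 0)" for f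
  have Qadd: "Q (x + y) = Q x + Q y" if "x \<in> dV sc" "y \<in> dV sc" for x y
    using Q that unfolding dV_dual_def by blast
  have Qsc: "Q (fscale c x) = c * Q x" if "x \<in> dV sc" for c x
    using Q that unfolding dV_dual_def by blast
  have a0d: "a0 \<in> d_dual sc"
    unfolding d_dual_def conj_functionals_def
  proof (intro CollectI conjI ballI allI impI)
    fix x y assume xy: "x \<in> dual_space sc" "y \<in> dual_space sc"
    have "(\<lambda>v. cnj ((x + y) v)) = (\<lambda>v. cnj (x v)) + (\<lambda>v. cnj (y v))" by auto
    then show "a0 (x + y) = a0 x + a0 y"
      using xy dual_closed(2)[OF xy] Qadd[OF cnj_dV cnj_dV] by (simp add: a0_def)
  next
    fix c x assume x: "x \<in> dual_space sc"
    have "(\<lambda>v. cnj (fscale c x v)) = fscale (cnj c) (\<lambda>v. cnj (x v))" by (auto simp: fscale_def)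
    then show "a0 (fscale c x) = cnj c * a0 x"
      using x dual_closed(3)[OF x] Qsc[OF cnj_dV] by (simp add: a0_def)
  next
    fix x assume "x \<notin> dual_space sc" then show "a0 x = 0" by (simp add: a0_def)
  qed
  have a0e: "\<forall>\<phi>\<in>dV sc. dual_ev sc Bas a0 \<phi> = Q \<phi>"
  proof
    fix \<phi> assume ph: "\<phi> \<in> dV sc"
    have "dual_ev sc Bas a0 \<phi> = (\<Sum>b\<in>Bas. \<phi> b * Q (\<lambda>v. cnj (bstar b v)))"
      unfolding dual_ev_def a0_def using bstar_dual by simp
    also have "\<dots> = Q (\<Sum>b\<in>Bas. fscale (\<phi> b) (\<lambda>v. cnj (bstar b v)))"
      by (rule dVdual_sum[OF Q basfin, symmetric]) (use cnj_dV bstar_dual in auto)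
    also have "\<dots> = Q \<phi>" using dV_expand[OF ph] by simp
    finally show "dual_ev sc Bas a0 \<phi> = Q \<phi>" .
  qed
  have "duals_iso sc Bas Q = a0"
    unfolding duals_iso_def
  proof (rule the_equality)
    show "a0 \<in> d_dual sc \<and> (\<forall>\<phi>\<in>dV sc. dual_ev sc Bas a0 \<phi> = Q \<phi>)" using a0d a0e by blast
  next
    fix a assume A: "a \<in> d_dual sc \<and> (\<forall>\<phi>\<in>dV sc. dual_ev sc Bas a \<phi> = Q \<phi>)"
    show "a = a0"
    proof
      fix g show "a g = a0 g"
      proof (cases "g \<in> dual_space sc")
        case True
        have "a g = a (\<Sum>b\<in>Bas. fscale (g b) (bstar b))" using dual_expand[OF True] by simp
        also have "\<dots> = (\<Sum>b\<in>Bas. cnj (g b) * a (bstar b))"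
          by (rule ddual_sum) (use A basfin bstar_dual in auto)
        also have "\<dots> = dual_ev sc Bas a (\<lambda>v. cnj (g v))" unfolding dual_ev_def by simp
        also have "\<dots> = Q (\<lambda>v. cnj (g v))" using A cnj_dV[OF True] by blast
        finally show ?thesis using True by (simp add: a0_def)
      next
        case False then show ?thesis using A unfolding a0_def d_dual_def conj_functionals_def by simp
      qed
    qed
  qed
  then show ?thesis using f by (simp add: a0_def)
qed

lemma dual_form_eq:
  assumes g: "g \<in> dual_space sc" and g': "g' \<in> dual_space sc" and u: "form u = (\<lambda>w. cnj (g' w))"
  shows "dual_form sc Bas form g g' = g u"
proof -
  have "dual_form sc Bas form g g' = hstar_inv sc form g (form u)"
    unfolding dual_form_def using duals[OF conjunct1[OF hstar[OF g]] g'] u by simp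
  then show ?thesis using hstar[OF g] by simp
qed

lemma homog:
  assumes A: "vs.subspace A" and B: "vs.subspace B" and AB: "A \<inter> B = {0}"
    and fin: "finite E" and ind: "vs.independent E" and sp: "vs.span E = UNIV"
    and EAB: "E \<subseteq> A \<union> B" and e: "e \<in> E" "e \<in> A" and v: "v \<in> B"
  shows "vs.representation E v e = 0"
proof (rule ccontr)
  assume ne: "vs.representation E v e \<noteq> 0"
  let ?r = "\<lambda>x. vs.representation E v x"
  let ?E0 = "E \<inter> A"
  have vexp: "v = (\<Sum>x\<in>E. sc (?r x) x)"
    by (rule vs.sum_representation_eq[symmetric]) (use ind sp fin in auto)
  have split: "(\<Sum>x\<in>E. sc (?r x) x) = (\<Sum>x\<in>E - ?E0. sc (?r x) x) + (\<Sum>x\<in>?E0. sc (?r x) x)"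
    by (rule sum.subset_diff) (use fin in auto)
  have s1: "(\<Sum>x\<in>E - ?E0. sc (?r x) x) \<in> B"
    by (rule vs.subspace_sum[OF B]) (use EAB in \<open>auto intro!: vs.subspace_scale[OF B]\<close>)
  have s0A: "(\<Sum>x\<in>?E0. sc (?r x) x) \<in> A"
    by (rule vs.subspace_sum[OF A]) (auto intro!: vs.subspace_scale[OF A])
  have "(\<Sum>x\<in>?E0. sc (?r x) x) = v - (\<Sum>x\<in>E - ?E0. sc (?r x) x)"
    using vexp split by (simp add: algebra_simps)
  then have s0B: "(\<Sum>x\<in>?E0. sc (?r x) x) \<in> B" using vs.subspace_diff[OF B v s1] by simp
  have z: "(\<Sum>x\<in>?E0. sc (?r x) x) = 0" using s0A s0B AB by blast
  have "vs.dependent ?E0"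
    using fin z ne e by (subst vs.dependent_finite) auto
  moreover have "vs.independent ?E0" using vs.independent_mono[OF ind] by blast
  ultimately show False by blast
qed

lemma V_facts: "vs.subspace V0" "vs.subspace V1" "V0 \<inter> V1 = {0}"
  using H unfolding herm_super_def super_space_def by auto

lemma orth_form: "v \<in> V0 \<Longrightarrow> w \<in> V1 \<Longrightarrow> form v w = 0 \<and> form w v = 0"
  using H unfolding herm_super_def by blast

end

lemma fscale_module: "module fscale"
  by unfold_locales (auto simp: fscale_def algebra_simps)

theorem mainTheorem16:
  fixes sc :: "complex \<Rightarrow> 'v::ab_group_add \<Rightarrow> 'v"
    and Bas V0 V1 :: "'v set"
    and form :: "'v \<Rightarrow> 'v \<Rightarrow> complex"
    and p1 p2 p3 p4 :: nat
  assumes "herm_super sc Bas V0 V1 form"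
    and "has_signature sc UNIV V0 V1 form p1 p2 p3 p4"
  shows "has_signature fscale (dual_space sc) (dual_even sc V1) (dual_odd sc V0)
           (dual_form sc Bas form) p1 p2 p4 p3"
proof -
  interpret hs sc Bas V0 V1 form by unfold_locales (rule assms(1))
  interpret fs: module fscale by (rule fscale_module)
  obtain E where Efin: "finite E" and Eind: "vs.independent E" and Espan: "vs.span E = UNIV"
    and Ehom: "\<forall>e\<in>E. e \<in> V0 \<or> e \<in> V1"
    and Eorth: "\<forall>e\<in>E. \<forall>e'\<in>E. e \<noteq> e' \<longrightarrow> form e e' = 0"
    and Eval: "\<forall>e\<in>E. form e e \<in> {1, -1, \<i>, -\<i>}"
    and c1: "card {e\<in>E. form e e = 1} = p1" and c2: "card {e\<in>E. form e e = -1} = p2"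
    and c3: "card {e\<in>E. form e e = \<i>} = p3" and c4: "card {e\<in>E. form e e = -\<i>} = p4"
    using assms(2) unfolding has_signature_def by blast
  define ds where "ds e = (\<lambda>v. vs.representation E v e)" for e
  have dsd: "ds e \<in> dual_space sc" for e
    unfolding dual_space_def ds_def using vs.linear_representation[OF Eind Espan] by simp
  have dsval: "ds e x = (if e = x then 1 else 0)" if "x \<in> E" for e x
    unfolding ds_def using vs.representation_basis[OF Eind that] by simp
  have dsinj: "inj_on ds E"
  proof (rule inj_onI)
    fix e e' assume "e \<in> E" "e' \<in> E" "ds e = ds e'"
    then have "ds e e = ds e' e" by simp
    then show "e = e'" using dsval[OF \<open>e \<in> E\<close>] by (simp split: if_splits)
  qed
  have epsnz: "form e e \<noteq> 0" if "e \<in> E" for e using Eval that by auto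
  have Eexp: "(\<Sum>x\<in>E. sc (ds x w) x) = w" for w
    unfolding ds_def by (rule vs.sum_representation_eq) (use Eind Espan Efin in auto)
  have formexp: "form e' w = cnj (ds e' w) * form e' e'" if e': "e' \<in> E" for e' w
  proof -
    have "form e' w = form e' (\<Sum>x\<in>E. sc (ds x w) x)" by (simp add: Eexp)
    also have "\<dots> = (\<Sum>x\<in>E. cnj (ds x w) * form e' x)" by (rule dV_sum[OF formdV Efin])
    also have "\<dots> = cnj (ds e' w) * form e' e' + (\<Sum>x\<in>E - {e'}. cnj (ds x w) * form e' x)"
      by (rule sum.remove[OF Efin e'])
    also have "(\<Sum>x\<in>E - {e'}. cnj (ds x w) * form e' x) = 0"
      by (rule sum.neutral) (use Eorth e' in auto)
    finally show ?thesis by simp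
  qed
  have formu: "form (sc (inverse (form e' e')) e') = (\<lambda>w. cnj (ds e' w))" if e': "e' \<in> E" for e'
  proof
    fix w show "form (sc (inverse (form e' e')) e') w = cnj (ds e' w)"
      using formexp[OF e', of w] epsnz[OF e'] by (simp add: lin1)
  qed
  have df: "dual_form sc Bas form (ds e) (ds e') = inverse (form e' e') * (if e = e' then 1 else 0)"
    if e: "e \<in> E" and e': "e' \<in> E" for e e'
  proof -
    have "dual_form sc Bas form (ds e) (ds e') = ds e (sc (inverse (form e' e')) e')"
      by (rule dual_form_eq[OF dsd dsd formu[OF e']])
    also have "\<dots> = inverse (form e' e') * ds e e'" by (rule dual_lin(2)[OF dsd])
    finally show ?thesis using dsval[OF e'] by simp
  qed
  have dfd: "dual_form sc Bas form (ds e) (ds e) = inverse (form e e)" if "e \<in> E" for e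
    using df[OF that that] by simp
  have cnt: "{x\<in>ds ` E. dual_form sc Bas form x x = c} = ds ` {e\<in>E. form e e = inverse c}" for c
  proof -
    have "{x\<in>ds ` E. dual_form sc Bas form x x = c} = ds ` {e\<in>E. inverse (form e e) = c}"
      using dfd by auto
    also have "{e\<in>E. inverse (form e e) = c} = {e\<in>E. form e e = inverse c}"
      by (metis inverse_inverse_eq)
    finally show ?thesis .
  qed
  have cardc: "card {x\<in>ds ` E. dual_form sc Bas form x x = c} = card {e\<in>E. form e e = inverse c}" for c
    unfolding cnt by (rule card_image) (rule inj_on_subset[OF dsinj], auto)
  have invi: "inverse \<i> = - \<i>" "inverse (- \<i>) = \<i>" by (simp_all add: complex_eq_iff)
  show ?thesis
    unfolding has_signature_def
  proof (intro exI[of _ "ds ` E"] conjI)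
    show "finite (ds ` E)" using Efin by simp
    show "ds ` E \<subseteq> dual_space sc" using dsd by auto
    show "\<not> module.dependent fscale (ds ` E)"
    proof
      assume "module.dependent fscale (ds ` E)"
      then obtain t u where t: "finite t" "t \<subseteq> ds ` E" and s0: "(\<Sum>v\<in>t. fscale (u v) v) = 0"
        and nz: "\<exists>v\<in>t. u v \<noteq> 0"
        unfolding fs.dependent_explicit by blast
      then obtain e where e: "e \<in> E" "ds e \<in> t" "u (ds e) \<noteq> 0" by blast
      have "0 = (\<Sum>v\<in>t. fscale (u v) v) e" using s0 by simp
      also have "\<dots> = (\<Sum>v\<in>t. u v * v e)" by (simp add: sum_fun_apply fscale_def)
      also have "\<dots> = u (ds e) * ds e e + (\<Sum>v\<in>t - {ds e}. u v * v e)"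
        by (rule sum.remove[OF t(1) e(2)])
      also have "(\<Sum>v\<in>t - {ds e}. u v * v e) = 0"
      proof (rule sum.neutral, rule ballI)
        fix v assume v: "v \<in> t - {ds e}"
        then obtain e'' where "e'' \<in> E" "v = ds e''" using t by blast
        then show "u v * v e = 0" using v dsval[OF e(1)] by auto
      qed
      finally show False using e dsval[OF e(1)] by simp
    qed
    show "fs.span (ds ` E) = dual_space sc"
    proof
      show "fs.span (ds ` E) \<subseteq> dual_space sc"
      proof (rule fs.span_minimal)
        show "ds ` E \<subseteq> dual_space sc" using dsd by auto
        show "fs.subspace (dual_space sc)"
          unfolding fs.subspace_def using dual_closed by blast
      qed
    next
      show "dual_space sc \<subseteq> fs.span (ds ` E)"
      proof
        fix f assume f: "f \<in> dual_space sc"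
        have "f = (\<Sum>e\<in>E. fscale (f e) (ds e))"
        proof
          fix x
          have "f x = f (\<Sum>e\<in>E. sc (ds e x) e)" by (simp add: Eexp)
          also have "\<dots> = (\<Sum>e\<in>E. ds e x * f e)" by (rule dual_sum[OF f Efin])
          finally show "f x = (\<Sum>e\<in>E. fscale (f e) (ds e)) x"
            by (simp add: sum_fun_apply fscale_def mult.commute)
        qed
        also have "\<dots> \<in> fs.span (ds ` E)"
          by (rule fs.span_sum, rule fs.span_scale, rule fs.span_base) auto
        finally show "f \<in> fs.span (ds ` E)" .
      qed
    qed
    show "\<forall>x\<in>ds ` E. x \<in> dual_even sc V1 \<or> x \<in> dual_odd sc V0"
    proof
      fix x assume "x \<in> ds ` E"
      then obtain e where e: "e \<in> E" "x = ds e" by blast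
      have EAB: "E \<subseteq> V0 \<union> V1" using Ehom by auto
      show "x \<in> dual_even sc V1 \<or> x \<in> dual_odd sc V0"
      proof (cases "e \<in> V0")
        case True
        have "\<forall>v\<in>V1. ds e v = 0"
          unfolding ds_def using homog[OF V_facts Efin Eind Espan EAB e(1) True] by blast
        then show ?thesis using e dsd unfolding dual_even_def by auto
      next
        case False
        then have e1: "e \<in> V1" using Ehom e by blast
        have AB: "V1 \<inter> V0 = {0}" using V_facts(3) by blast
        have "\<forall>v\<in>V0. ds e v = 0"
          unfolding ds_def using homog[OF V_facts(2) V_facts(1) AB Efin Eind Espan _ e(1) e1] EAB by blast
        then show ?thesis using e dsd unfolding dual_odd_def by auto
      qed
    qed
    show "\<forall>x\<in>ds ` E. \<forall>y\<in>ds ` E. x \<noteq> y \<longrightarrow> dual_form sc Bas form x y = 0"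
      using df by auto
    show "\<forall>x\<in>ds ` E. dual_form sc Bas form x x \<in> {1, -1, \<i>, -\<i>}"
      using dfd Eval invi by auto
  qed (use cardc[of 1] cardc[of "-1"] cardc[of "\<i>"] cardc[of "-\<i>"] c1 c2 c3 c4 invi in simp_all)
qed

end
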